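(* Let $\mathcal P$ be a non-degenerate polar space of finite rank $n\ge2$ with no thin lines, and let $C=(X_\delta)_{\delta\le\omega}$ be a well ordered chain of nice subspaces of $\mathcal P$ (indexed by the ordinals $\delta\le\omega$, increasing) with $X_\omega=\mathcal P$. The following are equivalent: (a) $C$ is maximal among well ordered chains of $\mathfrak N(\mathcal P)$; (b) $C$ is maximal among all chains of $\mathfrak N(\mathcal P)$; (c) all the following hold: (1) $\langle F\rangle_{\mathcal P}=X_0$ for every frame $F$ of $X_0$; (2) for every $\delta<\omega$, $X_\delta$ is a maximal proper subspace of $X_{\delta+1}$; (3) for every limit ordinal $\gamma\le\omega$, $X_\gamma=\bigcup_{\delta<\gamma}X_\delta$.
   Context: A point-line geometry with each two points on at most one line; a subspace is a set of points containing every line meeting it in $\ge2$ points; $\langle S\rangle_{\mathcal P}$ is the smallest subspace containing $S$. Collinearity is written $\perp$. Singular subspaces are subspaces whose points are pairwise collinear (projective spaces); rank of $\mathcal P$ is the maximal projective rank (dimension $+1$) of a singular subspace. A nice subspace is a subspace containing two mutually disjoint maximal singular subspaces (equivalently $\mathcal P$ induces on it a non-degenerate polar space of rank $n$); $\mathfrak N(\mathcal P)$ is the set of nice subspaces ordered by inclusion. A frame is a pair of bases $\{p_1,\dots,p_n\}$, $\{p'_1,\dots,p'_n\}$ of two disjoint maximal singular subspaces with $p_i\perp p'_j$ iff $i\ne j$. *)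

theory Defs
  imports Main
begin

definition point_line_geometry :: "'p set \<Rightarrow> 'p set set \<Rightarrow> bool" where
  "point_line_geometry P L \<longleftrightarrow>
     (\<forall>l\<in>L. l \<subseteq> P \<and> (\<exists>a b. a \<in> l \<and> b \<in> l \<and> a \<noteq> b)) \<and>
     (\<forall>l\<in>L. \<forall>m\<in>L. \<forall>a b. a \<noteq> b \<and> a \<in> l \<and> b \<in> l \<and> a \<in> m \<and> b \<in> m \<longrightarrow> l = m)"

text \<open>Collinearity (a point is collinear with itself).\<close>
definition perp :: "'p set \<Rightarrow> 'p set set \<Rightarrow> 'p \<Rightarrow> 'p \<Rightarrow> bool" where
  "perp P L p q \<longleftrightarrow> p \<in> P \<and> q \<in> P \<and> (p = q \<or> (\<exists>l\<in>L. p \<in> l \<and> q \<in> l))"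

definition polar_space :: "'p set \<Rightarrow> 'p set set \<Rightarrow> bool" where
  "polar_space P L \<longleftrightarrow> point_line_geometry P L \<and>
     (\<forall>p\<in>P. \<forall>l\<in>L. (\<exists>!q. q \<in> l \<and> perp P L p q) \<or> (\<forall>q\<in>l. perp P L p q))"

definition non_degenerate :: "'p set \<Rightarrow> 'p set set \<Rightarrow> bool" where
  "non_degenerate P L \<longleftrightarrow> \<not> (\<exists>p\<in>P. \<forall>q\<in>P. perp P L p q)"

definition thin_line :: "'p set \<Rightarrow> bool" where
  "thin_line l \<longleftrightarrow> card l = 2"

definition subspace :: "'p set \<Rightarrow> 'p set set \<Rightarrow> 'p set \<Rightarrow> bool" where
  "subspace P L S \<longleftrightarrow> S \<subseteq> P \<and>
     (\<forall>l\<in>L. (\<exists>a b. a \<noteq> b \<and> a \<in> l \<and> b \<in> l \<and> a \<in> S \<and> b \<in> S) \<longrightarrow> l \<subseteq> S)"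

definition span :: "'p set \<Rightarrow> 'p set set \<Rightarrow> 'p set \<Rightarrow> 'p set" where
  "span P L S = \<Inter> {T. subspace P L T \<and> S \<subseteq> T}"

definition singular_subspace :: "'p set \<Rightarrow> 'p set set \<Rightarrow> 'p set \<Rightarrow> bool" where
  "singular_subspace P L S \<longleftrightarrow> subspace P L S \<and> (\<forall>p\<in>S. \<forall>q\<in>S. perp P L p q)"

text \<open>Projective rank (dimension + 1) of a subspace: the least size of a
generating set.\<close>
definition proj_rank :: "'p set \<Rightarrow> 'p set set \<Rightarrow> 'p set \<Rightarrow> nat \<Rightarrow> bool" where
  "proj_rank P L S k \<longleftrightarrow>
     (\<exists>T. T \<subseteq> S \<and> finite T \<and> card T = k \<and> span P L T = S) \<and>
     (\<forall>T. T \<subseteq> S \<and> finite T \<and> span P L T = S \<longrightarrow> k \<le> card T)"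

definition polar_rank :: "'p set \<Rightarrow> 'p set set \<Rightarrow> nat \<Rightarrow> bool" where
  "polar_rank P L n \<longleftrightarrow>
     (\<forall>S. singular_subspace P L S \<longrightarrow> (\<exists>k\<le>n. proj_rank P L S k)) \<and>
     (\<exists>S. singular_subspace P L S \<and> proj_rank P L S n)"

definition max_singular :: "'p set \<Rightarrow> 'p set set \<Rightarrow> 'p set \<Rightarrow> bool" where
  "max_singular P L M \<longleftrightarrow> singular_subspace P L M \<and>
     (\<forall>M'. singular_subspace P L M' \<and> M \<subseteq> M' \<longrightarrow> M' = M)"

definition nice_subspace :: "'p set \<Rightarrow> 'p set set \<Rightarrow> 'p set \<Rightarrow> bool" where
  "nice_subspace P L X \<longleftrightarrow> subspace P L X \<and>
     (\<exists>M1 M2. max_singular P L M1 \<and> max_singular P L M2 \<and> M1 \<subseteq> X \<and> M2 \<subseteq> X \<and> M1 \<inter> M2 = {})"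

definition is_basis :: "'p set \<Rightarrow> 'p set set \<Rightarrow> 'p set \<Rightarrow> 'p set \<Rightarrow> bool" where
  "is_basis P L M B \<longleftrightarrow> B \<subseteq> M \<and> span P L B = M \<and> (\<forall>b\<in>B. b \<notin> span P L (B - {b}))"

definition is_frame :: "'p set \<Rightarrow> 'p set set \<Rightarrow> nat \<Rightarrow> 'p set \<Rightarrow> (nat \<Rightarrow> 'p) \<Rightarrow> (nat \<Rightarrow> 'p) \<Rightarrow> bool" where
  "is_frame P L n X p p' \<longleftrightarrow>
     (\<exists>M1 M2. max_singular P L M1 \<and> max_singular P L M2 \<and> M1 \<subseteq> X \<and> M2 \<subseteq> X \<and> M1 \<inter> M2 = {} \<and>
        inj_on p {..<n} \<and> inj_on p' {..<n} \<and>
        is_basis P L M1 (p ` {..<n}) \<and> is_basis P L M2 (p' ` {..<n}) \<and>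
        (\<forall>i<n. \<forall>j<n. perp P L (p i) (p' j) \<longleftrightarrow> i \<noteq> j))"

definition nice_chain :: "'p set \<Rightarrow> 'p set set \<Rightarrow> 'p set set \<Rightarrow> bool" where
  "nice_chain P L C \<longleftrightarrow> (\<forall>X\<in>C. nice_subspace P L X) \<and> (\<forall>X\<in>C. \<forall>Y\<in>C. X \<subseteq> Y \<or> Y \<subseteq> X)"

definition wo_nice_chain :: "'p set \<Rightarrow> 'p set set \<Rightarrow> 'p set set \<Rightarrow> bool" where
  "wo_nice_chain P L C \<longleftrightarrow> nice_chain P L C \<and>
     (\<forall>D. D \<subseteq> C \<and> D \<noteq> {} \<longrightarrow> (\<exists>X\<in>D. \<forall>Y\<in>D. X \<subseteq> Y))"

end

theory Submission
  imports Defs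
begin


locale ps =
  fixes P :: "'p set" and L :: "'p set set"
  assumes polar: "polar_space P L" and nondeg: "non_degenerate P L"
begin

abbreviation pp where "pp x y \<equiv> perp P L x y"

lemma geom: "point_line_geometry P L" using polar polar_space_def by blast

lemma line_sub: "l \<in> L \<Longrightarrow> l \<subseteq> P"
  using geom unfolding point_line_geometry_def by blast

lemma line_two: "l \<in> L \<Longrightarrow> \<exists>a b. a \<in> l \<and> b \<in> l \<and> a \<noteq> b"
  using geom unfolding point_line_geometry_def by blast

lemma perp_sym: "pp x y \<Longrightarrow> pp y x" unfolding perp_def by blast
lemma perp_P: "pp x y \<Longrightarrow> x \<in> P \<and> y \<in> P" unfolding perp_def by blast
lemma perp_refl: "x \<in> P \<Longrightarrow> pp x x" unfolding perp_def by blast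
lemma perp_line: "\<lbrakk>l \<in> L; a \<in> l; b \<in> l\<rbrakk> \<Longrightarrow> pp a b"
  unfolding perp_def using line_sub by blast
lemma line_ex: "\<lbrakk>pp a b; a \<noteq> b\<rbrakk> \<Longrightarrow> \<exists>l\<in>L. a \<in> l \<and> b \<in> l"
  unfolding perp_def by blast

lemma ooa: "\<lbrakk>x \<in> P; l \<in> L\<rbrakk> \<Longrightarrow> (\<exists>!q. q \<in> l \<and> pp x q) \<or> (\<forall>q\<in>l. pp x q)"
  using polar unfolding polar_space_def by blast

lemma ooa_ex: "\<lbrakk>x \<in> P; l \<in> L\<rbrakk> \<Longrightarrow> \<exists>q\<in>l. pp x q"
proof -
  assume a: "x \<in> P" "l \<in> L"
  show ?thesis
  proof (cases "\<forall>q\<in>l. pp x q")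
    case True then show ?thesis using line_two[OF a(2)] by blast
  next
    case False then have "\<exists>!q. q \<in> l \<and> pp x q" using ooa[OF a] by blast
    then show ?thesis by (metis ex1E)
  qed
qed

lemma two_all: "\<lbrakk>l \<in> L; a \<in> l; b \<in> l; a \<noteq> b; pp x a; pp x b; c \<in> l\<rbrakk> \<Longrightarrow> pp x c"
proof -
  assume a: "l \<in> L" "a \<in> l" "b \<in> l" "a \<noteq> b" "pp x a" "pp x b" "c \<in> l"
  have xP: "x \<in> P" using perp_P[OF a(5)] by blast
  have "\<not> (\<exists>!q. q \<in> l \<and> pp x q)" using a by (metis ex1E)
  then have "\<forall>q\<in>l. pp x q" using ooa[OF xP a(1)] by blast
  then show ?thesis using a(7) by blast
qed

lemma nd: "c \<in> P \<Longrightarrow> \<exists>z\<in>P. \<not> pp z c"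
  using nondeg perp_sym unfolding non_degenerate_def by blast

definition perpset where "perpset A = {x \<in> P. \<forall>a\<in>A. pp a x}"

lemma subspace_perpset: "subspace P L (perpset A)"
  unfolding subspace_def perpset_def
proof (intro conjI ballI impI)
  fix l assume l: "l \<in> L" and "\<exists>a b. a \<noteq> b \<and> a \<in> l \<and> b \<in> l \<and> a \<in> {x \<in> P. \<forall>a\<in>A. pp a x} \<and> b \<in> {x \<in> P. \<forall>a\<in>A. pp a x}"
  then obtain a b where ab: "a \<noteq> b" "a \<in> l" "b \<in> l" "\<forall>c\<in>A. pp c a" "\<forall>c\<in>A. pp c b" by blast
  show "l \<subseteq> {x \<in> P. \<forall>a\<in>A. pp a x}"
    using two_all[OF l ab(2,3,1)] ab line_sub[OF l] by blast
qed auto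

lemma subspace_P: "subspace P L P" unfolding subspace_def using line_sub by blast

lemma subspace_Int: "subspace P L A \<Longrightarrow> subspace P L B \<Longrightarrow> subspace P L (A \<inter> B)"
  unfolding subspace_def by blast

lemma sub_line: "\<lbrakk>subspace P L S; l \<in> L; a \<in> l; b \<in> l; a \<noteq> b; a \<in> S; b \<in> S\<rbrakk> \<Longrightarrow> l \<subseteq> S"
  unfolding subspace_def by blast

lemma sub_P: "subspace P L S \<Longrightarrow> S \<subseteq> P" unfolding subspace_def by blast

lemma span_sub: assumes SP: "S \<subseteq> P" shows "subspace P L (span P L S)"
  unfolding subspace_def
proof (intro conjI ballI impI)
  show "span P L S \<subseteq> P" unfolding span_def using subspace_P SP by blast
next
  fix l assume l: "l \<in> L" and "\<exists>a b. a \<noteq> b \<and> a \<in> l \<and> b \<in> l \<and> a \<in> span P L S \<and> b \<in> span P L S"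
  then obtain a b where ab: "a \<noteq> b" "a \<in> l" "b \<in> l" "a \<in> span P L S" "b \<in> span P L S" by blast
  show "l \<subseteq> span P L S" unfolding span_def
  proof (rule Inter_greatest)
    fix T assume "T \<in> {T. subspace P L T \<and> S \<subseteq> T}"
    hence T: "subspace P L T" "S \<subseteq> T" by auto
    have "a \<in> T" "b \<in> T" using ab(4,5) T unfolding span_def by auto
    thus "l \<subseteq> T" using sub_line[OF T(1) l ab(2,3,1)] by blast
  qed
qed

lemma span_inc: "S \<subseteq> span P L S" unfolding span_def by blast
lemma span_least: "subspace P L T \<Longrightarrow> S \<subseteq> T \<Longrightarrow> span P L S \<subseteq> T" unfolding span_def by blast
lemma span_mono: "S \<subseteq> S' \<Longrightarrow> span P L S \<subseteq> span P L S'" unfolding span_def by blast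
lemma span_empty: "span P L {} = {}"
proof -
  have "subspace P L {}" unfolding subspace_def by blast
  thus ?thesis using span_least[of "{}" "{}"] by blast
qed
lemma span_P: "S \<subseteq> P \<Longrightarrow> span P L S \<subseteq> P" using span_least subspace_P by blast

definition clique where "clique S \<longleftrightarrow> S \<subseteq> P \<and> (\<forall>x\<in>S. \<forall>y\<in>S. pp x y)"

lemma clique_sub: "clique A \<Longrightarrow> B \<subseteq> A \<Longrightarrow> clique B" unfolding clique_def by blast

lemma span_clique: assumes "clique K" shows "clique (span P L K)"
proof -
  have KP: "K \<subseteq> P" using assms clique_def by blast
  have "K \<subseteq> perpset K" using assms unfolding clique_def perpset_def by blast
  hence s1: "span P L K \<subseteq> perpset K" using span_least subspace_perpset by blast
  have "\<forall>y\<in>span P L K. span P L K \<subseteq> perpset {y}"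
  proof
    fix y assume y: "y \<in> span P L K"
    have "K \<subseteq> perpset {y}" using s1 y KP unfolding perpset_def using perp_sym by blast
    thus "span P L K \<subseteq> perpset {y}" using span_least subspace_perpset by blast
  qed
  thus ?thesis unfolding clique_def perpset_def using span_P[OF KP] by blast
qed

lemma singular_iff: "singular_subspace P L S \<longleftrightarrow> subspace P L S \<and> clique S"
  unfolding singular_subspace_def clique_def subspace_def by blast

lemma max_absorb:
  assumes M: "max_singular P L M" and x: "x \<in> P" and perp: "\<forall>m\<in>M. pp m x"
  shows "x \<in> M"
proof -
  have Ms: "subspace P L M" "clique M" using M singular_iff max_singular_def by blast+
  have "clique (insert x M)" using Ms(2) x perp perp_sym perp_refl unfolding clique_def by blast
  hence "clique (span P L (insert x M))" by (rule span_clique)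
  moreover have "subspace P L (span P L (insert x M))"
    apply (rule span_sub) using sub_P[OF Ms(1)] x by blast
  ultimately have "singular_subspace P L (span P L (insert x M))" using singular_iff by blast
  moreover have "M \<subseteq> span P L (insert x M)" using span_inc by blast
  ultimately have "span P L (insert x M) = M" using M max_singular_def by blast
  thus ?thesis using span_inc[of "insert x M"] by blast
qed

end



context ps
begin

lemma E1:
  assumes Q: "subspace P L Q" and l: "l \<in> L" "l \<subseteq> Q" and ab: "a \<in> l" "b \<in> l" "a \<noteq> b"
    and ex: "\<And>c. c \<in> l \<Longrightarrow> \<exists>z\<in>Q. \<not> pp z c"
  shows "\<exists>v\<in>Q. pp v a \<and> \<not> pp v b"
proof -
  have QP: "Q \<subseteq> P" using sub_P[OF Q] .
  have aP: "a \<in> P" using ab l QP by blast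
  obtain p1 where p1: "p1 \<in> Q" "\<not> pp p1 a" using ex ab by blast
  have p1P: "p1 \<in> P" using p1 QP by blast
  obtain c1 where c1: "c1 \<in> l" "pp p1 c1" using ooa_ex[OF p1P l(1)] by blast
  obtain q1 where q1: "q1 \<in> Q" "\<not> pp q1 c1" using ex c1 by blast
  have q1P: "q1 \<in> P" using q1 QP by blast
  obtain d where d: "d \<in> l" "pp q1 d" using ooa_ex[OF q1P l(1)] by blast
  have dc1: "d \<noteq> c1" using q1 d by auto
  have p1c1: "p1 \<noteq> c1"
  proof
    assume "p1 = c1"
    hence "pp p1 a" using perp_line[OF l(1) c1(1) ab(1)] by simp
    thus False using p1 by simp
  qed
  obtain M where M: "M \<in> L" "p1 \<in> M" "c1 \<in> M" using line_ex[OF c1(2) p1c1] by blast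
  have MQ: "M \<subseteq> Q" using sub_line[OF Q M(1) M(2) M(3) p1c1] p1 c1 l by blast
  obtain e where e: "e \<in> M" "pp q1 e" using ooa_ex[OF q1P M(1)] by blast
  have ec1: "e \<noteq> c1" using q1 e by auto
  have q1e: "q1 \<noteq> e"
  proof
    assume "q1 = e"
    hence "pp q1 c1" using perp_line[OF M(1) e(1) M(3)] by simp
    thus False using q1 by simp
  qed
  obtain N where N: "N \<in> L" "q1 \<in> N" "e \<in> N" using line_ex[OF e(2) q1e] by blast
  have NQ: "N \<subseteq> Q" using sub_line[OF Q N(1) N(2) N(3) q1e] q1 e MQ by blast
  obtain v where v: "v \<in> N" "pp a v" using ooa_ex[OF aP N(1)] by blast
  show ?thesis
  proof (intro bexI conjI)
    show "v \<in> Q" using v NQ by blast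
    show "pp v a" using perp_sym[OF v(2)] .
    show "\<not> pp v b"
    proof
      assume vb: "pp v b"
      have vl: "\<And>c. c \<in> l \<Longrightarrow> pp v c" using two_all[OF l(1) ab(1) ab(2) ab(3)] perp_sym[OF v(2)] vb by blast
      have vq1: "v \<noteq> q1" using vl[OF c1(1)] q1(2) by blast
      have "pp d e" using two_all[OF N(1) N(2) v(1) vq1[symmetric] perp_sym[OF d(2)] perp_sym[OF vl[OF d(1)]] N(3)] .
      have el: "\<And>c. c \<in> l \<Longrightarrow> pp e c"
        using two_all[OF l(1) c1(1) d(1) dc1[symmetric] perp_line[OF M(1) e(1) M(3)] perp_sym[OF \<open>pp d e\<close>]] by blast
      have "pp a p1" using two_all[OF M(1) e(1) M(3) ec1 perp_sym[OF el[OF ab(1)]] perp_line[OF l(1) ab(1) c1(1)] M(2)] .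
      thus False using p1(2) perp_sym by blast
    qed
  qed
qed

lemma SEP:
  assumes tq: "t \<in> P" "q \<in> P" "\<not> pp t q" and fin: "finite T"
  shows "T \<subseteq> perpset {t,q} \<Longrightarrow> clique (span P L T) \<Longrightarrow> r \<in> perpset {t,q} \<Longrightarrow>
    (\<forall>w\<in>span P L T. pp w r) \<Longrightarrow> r \<notin> span P L T \<Longrightarrow>
    \<exists>y\<in>perpset {t,q}. (\<forall>w\<in>span P L T. pp w y) \<and> \<not> pp y r"
  using fin
proof (induction T arbitrary: r rule: finite_induct)
  case empty
  have r: "r \<in> P" "pp t r" "pp q r" using empty.prems(3) unfolding perpset_def by auto
  have tr: "t \<noteq> r" using r(3) tq(3) perp_sym by blast
  obtain K1 where K1: "K1 \<in> L" "t \<in> K1" "r \<in> K1" using line_ex[OF r(2) tr] by blast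
  have "\<exists>v\<in>P. pp v t \<and> \<not> pp v r"
    apply (rule E1[OF subspace_P K1(1) line_sub[OF K1(1)] K1(2) K1(3) tr])
    using nd line_sub[OF K1(1)] by blast
  then obtain z where z: "z \<in> P" "pp z t" "\<not> pp z r" by blast
  have zt: "t \<noteq> z" using z r by blast
  obtain K where K: "K \<in> L" "t \<in> K" "z \<in> K" using line_ex[OF perp_sym[OF z(2)] zt] by blast
  obtain y where y: "y \<in> K" "pp q y" using ooa_ex[OF tq(2) K(1)] by blast
  have yt: "y \<noteq> t" using y tq(3) perp_sym by blast
  have ty: "pp t y" using perp_line[OF K(1) K(2) y(1)] .
  have yR: "y \<in> perpset {t,q}" unfolding perpset_def using ty y perp_P by blast
  have "\<not> pp y r"
  proof
    assume "pp y r"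
    hence "pp r z" using two_all[OF K(1) K(2) y(1) yt[symmetric] perp_sym[OF r(2)] perp_sym[OF \<open>pp y r\<close>] K(3)] by blast
    thus False using z(3) perp_sym by blast
  qed
  thus ?case using yR span_empty by auto
next
  case (insert s T0)
  define W0 where "W0 = span P L T0"
  define W where "W = span P L (insert s T0)"
  have T0R: "T0 \<subseteq> perpset {t,q}" using insert.prems(1) by blast
  have RP: "perpset {t,q} \<subseteq> P" unfolding perpset_def by blast
  have T0P: "T0 \<subseteq> P" using T0R RP by blast
  have TP: "insert s T0 \<subseteq> P" using insert.prems(1) RP by blast
  have W0W: "W0 \<subseteq> W" unfolding W0_def W_def by (rule span_mono) blast
  have clW: "clique W" using insert.prems(2) W_def by simp
  have clW0: "clique W0" using clique_sub[OF clW W0W] .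
  have subW0: "subspace P L W0" unfolding W0_def using span_sub[OF T0P] .
  have subW: "subspace P L W" unfolding W_def using span_sub[OF TP] .
  have sW: "s \<in> W" unfolding W_def using span_inc by blast
  have rW: "r \<notin> W" "\<forall>w\<in>W. pp w r" using insert.prems W_def by auto
  show ?case
  proof (cases "s \<in> W0")
    case True
    have "W \<subseteq> W0" unfolding W_def using span_least[OF subW0] True span_inc[of T0] W0_def by blast
    hence "W = W0" using W0W by blast
    thus ?thesis using insert.IH[OF T0R] clW0 insert.prems(3) rW W_def W0_def by auto
  next
    case False
    define Q where "Q = perpset (insert t (insert q W0))"
    have subQ: "subspace P L Q" unfolding Q_def by (rule subspace_perpset)
    have rR: "r \<in> P" "pp t r" "pp q r" using insert.prems(3) unfolding perpset_def by auto
    have rQ: "r \<in> Q" unfolding Q_def perpset_def using rR rW W0W by blast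
    have sR: "s \<in> perpset {t,q}" using insert.prems(1) by blast
    have sQ: "s \<in> Q" unfolding Q_def perpset_def using sR clW W0W sW unfolding perpset_def clique_def by blast
    have rs: "r \<noteq> s" using sW rW by blast
    have prs: "pp r s" using rW sW perp_sym by blast
    obtain l where l: "l \<in> L" "r \<in> l" "s \<in> l" using line_ex[OF prs rs] by blast
    have lQ: "l \<subseteq> Q" using sub_line[OF subQ l rs rQ sQ] .
    have ex: "\<exists>z\<in>Q. \<not> pp z c" if c: "c \<in> l" for c
    proof -
      have cQ: "c \<in> Q" using c lQ by blast
      have cR: "c \<in> perpset {t,q}" using cQ unfolding Q_def perpset_def by blast
      have cW0: "\<forall>w\<in>W0. pp w c" using cQ unfolding Q_def perpset_def by blast
      have cnW0: "c \<notin> W0"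
      proof
        assume cin: "c \<in> W0"
        hence cs: "c \<noteq> s" using False by blast
        have "l \<subseteq> W" using sub_line[OF subW l(1) c l(3) cs] cin W0W sW by blast
        thus False using l rW by blast
      qed
      obtain y where y: "y \<in> perpset {t,q}" "\<forall>w\<in>W0. pp w y" "\<not> pp y c"
        using insert.IH[OF T0R, of c] clW0 cR cW0 cnW0 W0_def by blast
      have "y \<in> Q" unfolding Q_def perpset_def using y unfolding perpset_def by blast
      thus ?thesis using y(3) by blast
    qed
    obtain v where v: "v \<in> Q" "pp v s" "\<not> pp v r"
      using E1[OF subQ l(1) lQ l(3) l(2) rs[symmetric] ex] by blast
    have vR: "v \<in> perpset {t,q}" using v(1) unfolding Q_def perpset_def by blast
    have "insert s T0 \<subseteq> perpset {v}"
    proof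
      fix x assume x: "x \<in> insert s T0"
      show "x \<in> perpset {v}"
      proof (cases "x = s")
        case True thus ?thesis using v(2) TP unfolding perpset_def by blast
      next
        case False
        hence "x \<in> W0" using x span_inc[of T0] W0_def by blast
        hence "pp x v" using v(1) unfolding Q_def perpset_def by blast
        thus ?thesis using perp_sym x TP unfolding perpset_def by blast
      qed
    qed
    hence "W \<subseteq> perpset {v}" unfolding W_def using span_least subspace_perpset by blast
    hence "\<forall>w\<in>W. pp w v" unfolding perpset_def using perp_sym by blast
    thus ?thesis using vR v(3) W_def by blast
  qed
qed

lemma Proj:
  assumes tq: "t \<in> P" "q \<in> P" "\<not> pp t q" and fin: "finite T"
    and TR: "T \<subseteq> perpset {t,q}" and cl: "clique (span P L T)"
  shows "{x \<in> span P L (insert t T). pp q x} \<subseteq> span P L T"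
proof
  define W where "W = span P L T"
  define Y where "Y = {y \<in> perpset {t,q}. \<forall>w\<in>W. pp w y}"
  define V where "V = perpset (insert t (W \<union> Y))"
  have RP: "perpset {t,q} \<subseteq> P" unfolding perpset_def by blast
  have WR: "W \<subseteq> perpset {t,q}" unfolding W_def using span_least[OF subspace_perpset TR] .
  have clW: "clique W" using cl W_def by simp
  have TW: "T \<subseteq> W" unfolding W_def by (rule span_inc)
  have "insert t T \<subseteq> V"
  proof
    fix x assume x: "x \<in> insert t T"
    show "x \<in> V"
    proof (cases "x = t")
      case True
      have a1: "\<forall>w\<in>W. pp w t" using WR perp_sym unfolding perpset_def by blast
      have a2: "\<forall>y\<in>Y. pp y t" using perp_sym unfolding Y_def perpset_def by blast
      show ?thesis unfolding V_def perpset_def using True a1 a2 tq perp_refl by blast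
    next
      case False
      hence xT: "x \<in> T" using x by blast
      have xP: "x \<in> P" using xT TR RP by blast
      have a0: "pp t x" using xT TR unfolding perpset_def by blast
      have a1: "\<forall>w\<in>W. pp w x" using clW xT TW unfolding clique_def by blast
      have a2: "\<forall>y\<in>Y. pp y x" using xT TW perp_sym unfolding Y_def by blast
      show ?thesis unfolding V_def perpset_def using xP a0 a1 a2 by blast
    qed
  qed
  hence sV: "span P L (insert t T) \<subseteq> V" using span_least subspace_perpset V_def by blast
  fix x assume "x \<in> {x \<in> span P L (insert t T). pp q x}"
  hence x: "x \<in> V" "pp q x" using sV by auto
  have xR: "x \<in> perpset {t,q}" using x unfolding V_def perpset_def by blast
  have xW: "\<forall>w\<in>W. pp w x" using x unfolding V_def perpset_def by blast
  have xY: "\<forall>y\<in>Y. pp y x" using x unfolding V_def perpset_def by blast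
  show "x \<in> span P L T"
  proof (rule ccontr)
    assume "x \<notin> span P L T"
    then obtain y where y: "y \<in> perpset {t,q}" "\<forall>w\<in>W. pp w y" "\<not> pp y x"
      using SEP[OF tq fin TR cl xR] xW W_def by blast
    have "y \<in> Y" unfolding Y_def using y by blast
    thus False using xY y(3) by blast
  qed
qed

lemma hyp_cover:
  assumes S: "subspace P L S" "clique S" and s: "s \<in> S" and q: "q \<in> P" "\<not> pp q s"
  shows "S \<subseteq> span P L ({x\<in>S. pp q x} \<union> {s})"
proof
  fix x assume x: "x \<in> S"
  let ?A = "{x\<in>S. pp q x} \<union> {s}"
  have AP: "?A \<subseteq> P" using sub_P[OF S(1)] s by blast
  have subA: "subspace P L (span P L ?A)" using span_sub[OF AP] .
  show "x \<in> span P L ?A"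
  proof (cases "x = s")
    case True thus ?thesis using span_inc by blast
  next
    case False
    have "pp s x" using S(2) s x unfolding clique_def by blast
    then obtain l where l: "l \<in> L" "s \<in> l" "x \<in> l" using line_ex False by metis
    have lS: "l \<subseteq> S" using sub_line[OF S(1) l(1) l(2) l(3)] False s x by metis
    obtain y where y: "y \<in> l" "pp q y" using ooa_ex[OF q(1) l(1)] by blast
    have ys: "y \<noteq> s" using y q(2) by blast
    have "y \<in> span P L ?A" "s \<in> span P L ?A" using y lS span_inc[of ?A] by blast+
    hence "l \<subseteq> span P L ?A" using sub_line[OF subA l(1) y(1) l(2) ys] by blast
    thus ?thesis using l(3) by blast
  qed
qed

lemma Hlem:
  assumes fin: "finite T" and TP: "T \<subseteq> P" and cl: "clique (span P L T)" and qP: "q \<in> P"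
    and nx: "x0 \<in> span P L T" "\<not> pp q x0"
  shows "\<exists>T'. finite T' \<and> T' \<subseteq> P \<and> card T' + 1 \<le> card T \<and> span P L T' = {x \<in> span P L T. pp q x}"
proof -
  define S where "S = span P L T"
  have subS: "subspace P L S" unfolding S_def using span_sub[OF TP] .
  have clS: "clique S" using cl S_def by simp
  have TS: "T \<subseteq> S" unfolding S_def by (rule span_inc)
  obtain t where t: "t \<in> T" "\<not> pp q t"
  proof (rule ccontr)
    assume "\<not> thesis"
    hence "\<forall>t\<in>T. pp q t" using that by blast
    hence "T \<subseteq> perpset {q}" using TP unfolding perpset_def by blast
    hence "S \<subseteq> perpset {q}" unfolding S_def using span_least subspace_perpset by blast
    thus False using nx S_def unfolding perpset_def by blast
  qed
  have tP: "t \<in> P" using t TP by blast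
  have exy: "\<exists>y. \<exists>l\<in>L. t \<in> l \<and> x \<in> l \<and> y \<in> l \<and> pp q y" if x: "x \<in> T - {t}" for x
  proof -
    have "pp t x" using clS t(1) x TS unfolding clique_def by blast
    then obtain l where l: "l \<in> L" "t \<in> l" "x \<in> l" using line_ex x by blast
    obtain y where "y \<in> l" "pp q y" using ooa_ex[OF qP l(1)] by blast
    thus ?thesis using l by blast
  qed
  define f where "f x = (SOME y. \<exists>l\<in>L. t \<in> l \<and> x \<in> l \<and> y \<in> l \<and> pp q y)" for x
  have fprop: "\<exists>l\<in>L. t \<in> l \<and> x \<in> l \<and> f x \<in> l \<and> pp q (f x)" if x: "x \<in> T - {t}" for x
    unfolding f_def using someI_ex[OF exy[OF x]] .
  define T' where "T' = f ` (T - {t})"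
  have fS: "f x \<in> S" "pp q (f x)" "f x \<noteq> t" if x: "x \<in> T - {t}" for x
  proof -
    obtain l where l: "l \<in> L" "t \<in> l" "x \<in> l" "f x \<in> l" "pp q (f x)" using fprop[OF x] by blast
    have "l \<subseteq> S" using sub_line[OF subS l(1) l(2) l(3)] x t TS by blast
    thus "f x \<in> S" using l by blast
    show "pp q (f x)" using l by blast
    show "f x \<noteq> t" using l(5) t(2) by blast
  qed
  have T'S: "T' \<subseteq> S" using fS T'_def by blast
  have T'P: "T' \<subseteq> P" using T'S sub_P[OF subS] by blast
  have fin': "finite T'" using fin T'_def by blast
  have card': "card T' + 1 \<le> card T"
  proof -
    have "card T' \<le> card (T - {t})" unfolding T'_def by (rule card_image_le) (use fin in blast)
    moreover have "card (T - {t}) + 1 = card T" using fin t(1) card_Suc_Diff1 by fastforce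
    ultimately show ?thesis by linarith
  qed
  have itP: "insert t T' \<subseteq> P" using T'P tP by blast
  have subI: "subspace P L (span P L (insert t T'))" using span_sub[OF itP] .
  have "T \<subseteq> span P L (insert t T')"
  proof
    fix x assume x: "x \<in> T"
    show "x \<in> span P L (insert t T')"
    proof (cases "x = t")
      case True thus ?thesis using span_inc by blast
    next
      case False
      hence xt: "x \<in> T - {t}" using x by blast
      obtain l where l: "l \<in> L" "t \<in> l" "x \<in> l" "f x \<in> l" using fprop[OF xt] by blast
      have "f x \<in> span P L (insert t T')" "t \<in> span P L (insert t T')"
        using span_inc[of "insert t T'"] xt T'_def by blast+
      hence "l \<subseteq> span P L (insert t T')" using sub_line[OF subI l(1) l(4) l(2) fS(3)[OF xt]] by blast
      thus ?thesis using l by blast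
    qed
  qed
  hence "S \<subseteq> span P L (insert t T')" unfolding S_def using span_least[OF subI] by blast
  moreover have "span P L (insert t T') \<subseteq> S" using span_least[OF subS] T'S t TS by blast
  ultimately have Seq: "S = span P L (insert t T')" by blast
  have T'R: "T' \<subseteq> perpset {t,q}"
  proof
    fix y assume y: "y \<in> T'"
    then obtain x where x: "x \<in> T - {t}" "y = f x" using T'_def by blast
    have "pp t y" using clS t TS fS(1)[OF x(1)] x(2) unfolding clique_def by blast
    thus "y \<in> perpset {t,q}" using fS(2)[OF x(1)] x(2) T'P y unfolding perpset_def by blast
  qed
  have clT': "clique (span P L T')" using clique_sub[OF clS] span_least[OF subS T'S] by blast
  have tq: "\<not> pp t q" using t(2) perp_sym by blast
  have "{x \<in> span P L (insert t T'). pp q x} \<subseteq> span P L T'" using Proj[OF tP qP tq fin' T'R clT'] .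
  hence s1: "{x \<in> S. pp q x} \<subseteq> span P L T'" using Seq by simp
  have "T' \<subseteq> perpset {q}" using fS T'_def T'P unfolding perpset_def by blast
  hence "span P L T' \<subseteq> perpset {q}" using span_least subspace_perpset by blast
  hence s2: "span P L T' \<subseteq> {x \<in> S. pp q x}" using span_least[OF subS T'S] unfolding perpset_def by blast
  show ?thesis using s1 s2 fin' T'P card' S_def by blast
qed

lemma Dlem:
  "finite T \<Longrightarrow> T \<subseteq> P \<Longrightarrow> clique (span P L T) \<Longrightarrow> (\<forall>i<(k::nat). p i \<in> span P L T) \<Longrightarrow> (\<forall>j<k. q j \<in> P)
   \<Longrightarrow> (\<forall>i<k. \<forall>j<k. pp (p i) (q j) \<longleftrightarrow> i \<noteq> j) \<Longrightarrow> k \<le> card T"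
proof (induction k arbitrary: T)
  case 0 thus ?case by simp
next
  case (Suc k)
  have pk: "p k \<in> span P L T" using Suc.prems(4) by simp
  have qk: "q k \<in> P" using Suc.prems(5) by simp
  have npk: "\<not> pp (q k) (p k)" using Suc.prems(6) perp_sym by blast
  obtain T' where T': "finite T'" "T' \<subseteq> P" "card T' + 1 \<le> card T" "span P L T' = {x \<in> span P L T. pp (q k) x}"
    using Hlem[OF Suc.prems(1,2,3) qk pk npk] by blast
  have clT': "clique (span P L T')" using clique_sub[OF Suc.prems(3)] T'(4) by blast
  have "\<forall>i<k. p i \<in> span P L T'"
  proof (intro allI impI)
    fix i assume i: "i < k"
    have "pp (p i) (q k)" using Suc.prems(6) i by simp
    thus "p i \<in> span P L T'" using T'(4) Suc.prems(4) i perp_sym by simp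
  qed
  hence "k \<le> card T'" using Suc.IH[OF T'(1,2) clT'] Suc.prems(5,6) by simp
  thus ?case using T'(3) by simp
qed

lemma cover:
  assumes M: "subspace P L M" "clique M"
  shows "(\<forall>i<(k::nat). p i \<in> M) \<Longrightarrow> (\<forall>j<k. q j \<in> P) \<Longrightarrow> (\<forall>i<k. \<forall>j<k. pp (p i) (q j) \<longleftrightarrow> i \<noteq> j) \<Longrightarrow>
    M \<subseteq> span P L ({x\<in>M. \<forall>i<k. pp (q i) x} \<union> p ` {..<k})"
proof (induction k)
  case 0
  have e: "{x\<in>M. \<forall>i<(0::nat). pp (q i) x} \<union> p ` {..<0} = M" by auto
  show ?case unfolding e by (rule span_inc)
next
  case (Suc k)
  define Hk where "Hk = {x\<in>M. \<forall>i<k. pp (q i) x}"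
  define Hk1 where "Hk1 = {x\<in>M. \<forall>i<Suc k. pp (q i) x}"
  have pr1: "\<forall>i<k. p i \<in> M" "\<forall>j<k. q j \<in> P" "\<forall>i<k. \<forall>j<k. pp (p i) (q j) \<longleftrightarrow> i \<noteq> j"
    using Suc.prems by auto
  have IH: "M \<subseteq> span P L (Hk \<union> p ` {..<k})" using Suc.IH[OF pr1] unfolding Hk_def .
  have MP: "M \<subseteq> P" using sub_P[OF M(1)] .
  have Hkeq: "Hk = M \<inter> perpset (q ` {..<k})" unfolding Hk_def perpset_def using MP by auto
  have subH: "subspace P L Hk" unfolding Hkeq by (rule subspace_Int[OF M(1) subspace_perpset])
  have "Hk \<subseteq> M" unfolding Hk_def by blast
  hence clH: "clique Hk" by (rule clique_sub[OF M(2)])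
  have pkM: "p k \<in> M" using Suc.prems(1) by simp
  have pkq: "\<forall>i<k. pp (q i) (p k)"
  proof (intro allI impI)
    fix i assume "i < k"
    hence "pp (p k) (q i)" using Suc.prems(3) by simp
    thus "pp (q i) (p k)" by (rule perp_sym)
  qed
  have pkH: "p k \<in> Hk" unfolding Hk_def using pkM pkq by blast
  have qk: "q k \<in> P" using Suc.prems(2) by simp
  have "\<not> pp (p k) (q k)" using Suc.prems(3) by simp
  hence npk: "\<not> pp (q k) (p k)" using perp_sym by blast
  have c: "Hk \<subseteq> span P L ({x\<in>Hk. pp (q k) x} \<union> {p k})" using hyp_cover[OF subH clH pkH qk npk] .
  have eq: "{x\<in>Hk. pp (q k) x} = Hk1" unfolding Hk_def Hk1_def using less_Suc_eq by blast
  define B where "B = Hk1 \<union> p ` {..<Suc k}"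
  have BP: "B \<subseteq> P"
  proof -
    have "Hk1 \<subseteq> M" unfolding Hk1_def by blast
    moreover have "p ` {..<Suc k} \<subseteq> M" using Suc.prems(1) by auto
    ultimately show ?thesis unfolding B_def using MP by blast
  qed
  have "Hk1 \<union> {p k} \<subseteq> B" unfolding B_def by blast
  hence "span P L (Hk1 \<union> {p k}) \<subseteq> span P L B" by (rule span_mono)
  hence h1: "Hk \<subseteq> span P L B" using c unfolding eq by (rule_tac subset_trans) 
  have "p ` {..<k} \<subseteq> B" unfolding B_def by auto
  hence h2: "p ` {..<k} \<subseteq> span P L B" using span_inc[of B] by (rule subset_trans)
  have "Hk \<union> p ` {..<k} \<subseteq> span P L B" using h1 h2 by (rule Un_least)
  hence "span P L (Hk \<union> p ` {..<k}) \<subseteq> span P L B" by (rule span_least[OF span_sub[OF BP]])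
  hence "M \<subseteq> span P L B" using IH by (rule_tac subset_trans)
  thus ?case unfolding B_def Hk1_def .
qed

end



context ps
begin

lemma fg:
  assumes rank: "polar_rank P L n" and S: "singular_subspace P L S"
  shows "\<exists>T. finite T \<and> T \<subseteq> S \<and> card T \<le> n \<and> span P L T = S"
proof -
  have "\<exists>k\<le>n. proj_rank P L S k" using rank S unfolding polar_rank_def by blast
  then obtain k where k: "k \<le> n" "proj_rank P L S k" by blast
  then obtain T where "T \<subseteq> S" "finite T" "card T = k" "span P L T = S" unfolding proj_rank_def by blast
  thus ?thesis using k by blast
qed

lemma extend:
  assumes S: "subspace P L S" "clique S" and s: "s \<in> S" and q: "q \<in> P" "\<not> pp q s"
    and T0: "T0 \<subseteq> P" "span P L T0 = {x\<in>S. pp q x}"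
  shows "span P L (insert s T0) = S"
proof
  have "T0 \<subseteq> S" using T0 span_inc[of T0] by blast
  thus "span P L (insert s T0) \<subseteq> S" using span_least[OF S(1)] s by blast
next
  have sP: "s \<in> P" using s sub_P[OF S(1)] by blast
  have "{x\<in>S. pp q x} \<subseteq> span P L (insert s T0)" using T0(2) span_mono[of T0 "insert s T0"] by blast
  moreover have "s \<in> span P L (insert s T0)" using span_inc[of "insert s T0"] by blast
  ultimately have "{x\<in>S. pp q x} \<union> {s} \<subseteq> span P L (insert s T0)" by blast
  moreover have "insert s T0 \<subseteq> P" using T0(1) sP by blast
  ultimately have "span P L ({x\<in>S. pp q x} \<union> {s}) \<subseteq> span P L (insert s T0)"
    using span_least[OF span_sub[of "insert s T0"]] by blast
  with hyp_cover[OF S s q] show "S \<subseteq> span P L (insert s T0)" by (rule subset_trans)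
qed

lemma basis_pattern:
  assumes M: "subspace P L M" and sp: "span P L (p ` {..<m}) = M" and pts: "\<forall>i<(m::nat). p i \<in> M"
    and qP: "\<forall>j<m. q j \<in> P" and pat: "\<forall>i<m. \<forall>j<m. pp (p i) (q j) \<longleftrightarrow> i \<noteq> j"
  shows "inj_on p {..<m} \<and> is_basis P L M (p ` {..<m})"
proof (intro conjI)
  show "inj_on p {..<m}"
  proof (rule inj_onI)
    fix i j assume i: "i \<in> {..<m}" and j: "j \<in> {..<m}" and e: "p i = p j"
    show "i = j"
    proof (rule ccontr)
      assume "i \<noteq> j"
      hence "pp (p i) (q j)" using pat i j by simp
      moreover have "\<not> pp (p j) (q j)" using pat j by simp
      ultimately show False using e by simp
    qed
  qed
  have MP: "M \<subseteq> P" using sub_P[OF M] .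
  show "is_basis P L M (p ` {..<m})" unfolding is_basis_def
  proof (intro conjI ballI)
    show "p ` {..<m} \<subseteq> M" using pts by auto
    show "span P L (p ` {..<m}) = M" using sp .
    fix b assume b: "b \<in> p ` {..<m}"
    then obtain i where i: "i < m" "b = p i" by auto
    have "p ` {..<m} - {b} \<subseteq> perpset {q i}"
    proof
      fix x assume x: "x \<in> p ` {..<m} - {b}"
      then obtain j where j: "j < m" "x = p j" "j \<noteq> i" using i by auto
      have "pp (p j) (q i)" using pat i j by simp
      thus "x \<in> perpset {q i}" unfolding perpset_def using perp_sym perp_P j by blast
    qed
    hence "span P L (p ` {..<m} - {b}) \<subseteq> perpset {q i}" by (rule span_least[OF subspace_perpset])
    moreover have "\<not> pp (q i) b" using pat i perp_sym by auto
    ultimately show "b \<notin> span P L (p ` {..<m} - {b})" unfolding perpset_def by blast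
  qed
qed

lemma Glem:
  assumes rank: "polar_rank P L n" and M1: "max_singular P L M1" and M2: "max_singular P L M2"
    and disj: "M1 \<inter> M2 = {}" and pts: "\<forall>i<(m::nat). p i \<in> M1 \<and> p' i \<in> M2"
    and pat: "\<forall>i<m. \<forall>j<m. pp (p i) (p' j) \<longleftrightarrow> i \<noteq> j"
    and sp1: "span P L (p ` {..<m}) = M1" and sp2: "span P L (p' ` {..<m}) = M2"
    and S0: "singular_subspace P L S0"
  shows "\<exists>T. finite T \<and> T \<subseteq> P \<and> card T \<le> m \<and> span P L T = S0"
proof -
  define R where "R j = perpset (p ` {..<j} \<union> p' ` {..<j})" for j
  define gen where "gen S d \<longleftrightarrow> (\<exists>T. finite T \<and> T \<subseteq> P \<and> card T \<le> d \<and> span P L T = S)" for S d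
  have M1s: "subspace P L M1" "clique M1" using M1 singular_iff max_singular_def by blast+
  have M2s: "subspace P L M2" "clique M2" using M2 singular_iff max_singular_def by blast+
  have M1P: "M1 \<subseteq> P" using sub_P[OF M1s(1)] .
  have M2P: "M2 \<subseteq> P" using sub_P[OF M2s(1)] .
  have main: "\<forall>j. j + d = m \<longrightarrow> (\<forall>S. singular_subspace P L S \<and> S \<subseteq> R j \<longrightarrow> gen S d)" for d
  proof (induction d)
    case 0
    show ?case
    proof (intro allI impI)
      fix j S assume j: "j + 0 = m" and S: "singular_subspace P L S \<and> S \<subseteq> R j"
      have "S = {}"
      proof (rule ccontr)
        assume "S \<noteq> {}"
        then obtain x where x: "x \<in> S" by blast
        have xR: "x \<in> R m" using x S j by auto
        have xP: "x \<in> P" using xR unfolding R_def perpset_def by blast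
        have "p ` {..<m} \<subseteq> perpset {x}"
        proof
          fix y assume "y \<in> p ` {..<m}"
          hence "pp y x" using xR unfolding R_def perpset_def by blast
          thus "y \<in> perpset {x}" unfolding perpset_def using perp_sym perp_P by blast
        qed
        hence "M1 \<subseteq> perpset {x}" unfolding sp1[symmetric] by (rule span_least[OF subspace_perpset])
        hence "\<forall>y\<in>M1. pp y x" unfolding perpset_def using perp_sym by blast
        hence x1: "x \<in> M1" using max_absorb[OF M1 xP] by blast
        have "p' ` {..<m} \<subseteq> perpset {x}"
        proof
          fix y assume "y \<in> p' ` {..<m}"
          hence "pp y x" using xR unfolding R_def perpset_def by blast
          thus "y \<in> perpset {x}" unfolding perpset_def using perp_sym perp_P by blast
        qed
        hence "M2 \<subseteq> perpset {x}" unfolding sp2[symmetric] by (rule span_least[OF subspace_perpset])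
        hence "\<forall>y\<in>M2. pp y x" unfolding perpset_def using perp_sym by blast
        hence x2: "x \<in> M2" using max_absorb[OF M2 xP] by blast
        show False using x1 x2 disj by blast
      qed
      thus "gen S 0" unfolding gen_def using span_empty by (intro exI[of _ "{}"]) simp
    qed
  next
    case (Suc d)
    show ?case
    proof (intro allI impI)
      fix j S0 assume j: "j + Suc d = m" and S0: "singular_subspace P L S0 \<and> S0 \<subseteq> R j"
      have jm: "j < m" using j by simp
      define a where "a = p j"
      define b where "b = p' j"
      have aM: "a \<in> M1" using pts jm a_def by simp
      have bM: "b \<in> M2" using pts jm b_def by simp
      have aP: "a \<in> P" using aM M1P by blast
      have bP: "b \<in> P" using bM M2P by blast
      have nab: "\<not> pp a b" using pat jm a_def b_def by simp
      have aR: "a \<in> R j"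
      proof -
        have "\<forall>i<j. pp (p i) a" using M1s(2) pts jm aM unfolding clique_def by auto
        moreover have "\<forall>i<j. pp (p' i) a" using pat jm a_def perp_sym by auto
        ultimately show ?thesis unfolding R_def perpset_def using aP by auto
      qed
      have bR: "b \<in> R j"
      proof -
        have "\<forall>i<j. pp (p' i) b" using M2s(2) pts jm bM unfolding clique_def by auto
        moreover have "\<forall>i<j. pp (p i) b" using pat jm b_def by auto
        ultimately show ?thesis unfolding R_def perpset_def using bP by auto
      qed
      have R1: "R (Suc j) = {x \<in> R j. pp a x \<and> pp b x}"
        unfolding R_def perpset_def a_def b_def lessThan_Suc by auto
      have subR: "subspace P L (R j)" unfolding R_def by (rule subspace_perpset)
      have RP: "R j \<subseteq> P" using sub_P[OF subR] .
      have IH: "\<And>S. singular_subspace P L S \<Longrightarrow> S \<subseteq> R (Suc j) \<Longrightarrow> gen S d"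
      proof -
        fix S assume "singular_subspace P L S" "S \<subseteq> R (Suc j)"
        moreover have "Suc j + d = m" using j by simp
        ultimately show "gen S d" using Suc.IH by blast
      qed
      have claim12: "gen S (Suc d)" if S: "singular_subspace P L S" "S \<subseteq> R j" "\<forall>x\<in>S. pp a x" for S
      proof -
        have Ss: "subspace P L S" "clique S" using S(1) singular_iff by blast+
        have SP: "S \<subseteq> P" using sub_P[OF Ss(1)] .
        show ?thesis
        proof (cases "\<forall>x\<in>S. pp b x")
          case True
          hence "S \<subseteq> R (Suc j)" using S R1 by blast
          thus ?thesis using IH[OF S(1)] unfolding gen_def by fastforce
        next
          case False
          then obtain s where s: "s \<in> S" "\<not> pp b s" by blast
          define A where "A = {x\<in>S. pp b x}"
          have Aeq: "A = S \<inter> perpset {b}" unfolding A_def perpset_def using SP by blast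
          have subA: "subspace P L A" unfolding Aeq by (rule subspace_Int[OF Ss(1) subspace_perpset])
          have "A \<subseteq> S" unfolding A_def by blast
          hence clA: "clique A" by (rule clique_sub[OF Ss(2)])
          have sA: "singular_subspace P L A" using subA clA singular_iff by blast
          have "A \<subseteq> R (Suc j)" using S R1 unfolding A_def by blast
          then obtain T0 where T0: "finite T0" "T0 \<subseteq> P" "card T0 \<le> d" "span P L T0 = A"
            using IH[OF sA] unfolding gen_def by blast
          have "span P L (insert s T0) = S" using extend[OF Ss s(1) bP s(2) T0(2)] T0(4) A_def by blast
          moreover have "card (insert s T0) \<le> Suc d" using T0(1,3) by (simp add: card_insert_if)
          ultimately show ?thesis unfolding gen_def using T0 s SP by (intro exI[of _ "insert s T0"]) blast
        qed
      qed
      have S0s: "subspace P L S0" "clique S0" using S0 singular_iff by blast+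
      have S0P: "S0 \<subseteq> P" using sub_P[OF S0s(1)] .
      show "gen S0 (Suc d)"
      proof (cases "\<forall>x\<in>S0. pp a x")
        case True thus ?thesis using claim12 S0 by blast
      next
        case False
        then obtain s where s: "s \<in> S0" "\<not> pp a s" by blast
        have sP: "s \<in> P" using s S0P by blast
        obtain TS where TS: "finite TS" "TS \<subseteq> S0" "span P L TS = S0" using fg[OF rank] S0 by blast
        have TSP: "TS \<subseteq> P" using TS S0P by blast
        have clTS: "clique (span P L TS)" using TS S0s by simp
        have sTS: "s \<in> span P L TS" using TS s by simp
        obtain TA where TA: "finite TA" "TA \<subseteq> P" "span P L TA = {x \<in> span P L TS. pp a x}"
          using Hlem[OF TS(1) TSP clTS aP sTS s(2)] by blast
        define A where "A = {x\<in>S0. pp a x}"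
        have TAA: "span P L TA = A" using TA(3) TS(3) A_def by simp
        have TAsub: "TA \<subseteq> A" using span_inc[of TA] TAA by simp
        have AS: "A \<subseteq> S0" unfolding A_def by blast
        define S' where "S' = span P L (insert a TA)"
        have iaP: "insert a TA \<subseteq> P" using aP TA(2) by blast
        have cl1: "clique (insert a TA)"
          unfolding clique_def
        proof (intro conjI ballI)
          show "insert a TA \<subseteq> P" using iaP .
          fix x y assume x: "x \<in> insert a TA" and y: "y \<in> insert a TA"
          show "pp x y"
          proof (cases "x = a")
            case True
            show ?thesis
            proof (cases "y = a")
              case True thus ?thesis using \<open>x = a\<close> perp_refl aP by simp
            next
              case False thus ?thesis using \<open>x = a\<close> y TAsub A_def by auto
            qed
          next
            case False
            hence xA: "x \<in> A" using x TAsub by blast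
            show ?thesis
            proof (cases "y = a")
              case True thus ?thesis using xA A_def perp_sym by auto
            next
              case False
              hence "y \<in> A" using y TAsub by blast
              thus ?thesis using xA AS S0s(2) unfolding clique_def by blast
            qed
          qed
        qed
        have subS': "subspace P L S'" unfolding S'_def by (rule span_sub[OF iaP])
        have clS': "clique S'" unfolding S'_def by (rule span_clique[OF cl1])
        have sS': "singular_subspace P L S'" using subS' clS' singular_iff by blast
        have "insert a TA \<subseteq> R j" using aR TAsub AS S0 by blast
        hence S'R: "S' \<subseteq> R j" unfolding S'_def by (rule span_least[OF subR])
        have "insert a TA \<subseteq> perpset {a}" using iaP perp_refl aP TAsub unfolding perpset_def A_def by auto
        hence "S' \<subseteq> perpset {a}" unfolding S'_def by (rule span_least[OF subspace_perpset])
        hence S'a: "\<forall>x\<in>S'. pp a x" unfolding perpset_def by blast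
        obtain T1 where T1: "finite T1" "T1 \<subseteq> P" "card T1 \<le> Suc d" "span P L T1 = S'"
          using claim12[OF sS' S'R S'a] unfolding gen_def by blast
        have TAR: "TA \<subseteq> perpset {a, s}"
        proof
          fix x assume x: "x \<in> TA"
          hence "x \<in> A" using TAsub by blast
          hence "pp a x" "x \<in> S0" using A_def by auto
          moreover have "pp s x" using \<open>x \<in> S0\<close> s S0s(2) unfolding clique_def by blast
          ultimately show "x \<in> perpset {a, s}" unfolding perpset_def using perp_P by blast
        qed
        have clTA: "clique (span P L TA)" using clique_sub[OF S0s(2)] TAA AS by simp
        have nas: "\<not> pp a s" using s(2) .
        have pr: "{x \<in> S'. pp s x} \<subseteq> A" using Proj[OF aP sP nas TA(1) TAR clTA] TAA S'_def by simp
        have clT1: "clique (span P L T1)" using clS' T1(4) by simp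
        have aS': "a \<in> span P L T1" using T1(4) span_inc[of "insert a TA"] S'_def by blast
        have nsa: "\<not> pp s a" using nas perp_sym by blast
        obtain T2 where T2: "finite T2" "T2 \<subseteq> P" "card T2 + 1 \<le> card T1" "span P L T2 = {x \<in> span P L T1. pp s x}"
          using Hlem[OF T1(1) T1(2) clT1 sP aS' nsa] by blast
        have "A \<subseteq> {x \<in> S'. pp s x}"
        proof
          fix x assume x: "x \<in> A"
          have "A \<subseteq> S'" unfolding S'_def using TAA span_mono[of TA "insert a TA"] by blast
          moreover have "pp s x" using x AS s S0s(2) unfolding clique_def by blast
          ultimately show "x \<in> {x \<in> S'. pp s x}" using x by blast
        qed
        hence T2A: "span P L T2 = A" using pr T2(4) T1(4) by blast
        have "span P L (insert s T2) = S0" using extend[OF S0s s(1) aP s(2) T2(2)] T2A A_def by blast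
        moreover have "card (insert s T2) \<le> Suc d" using T2(1,3) T1(3) by (simp add: card_insert_if)
        ultimately show ?thesis unfolding gen_def using T2 sP by (intro exI[of _ "insert s T2"]) blast
      qed
    qed
  qed
  have "R 0 = P" unfolding R_def perpset_def by simp
  have S0P': "S0 \<subseteq> P" using S0 unfolding singular_subspace_def subspace_def by blast
  have "\<forall>S. singular_subspace P L S \<and> S \<subseteq> R 0 \<longrightarrow> gen S m" using main[of m] by simp
  hence "gen S0 m" using S0 S0P' \<open>R 0 = P\<close> by simp
  thus ?thesis unfolding gen_def .
qed

definition pf where "pf M1 M2 k p p' \<longleftrightarrow> (\<forall>i<(k::nat). p i \<in> M1 \<and> p' i \<in> M2) \<and> (\<forall>i<k. \<forall>j<k. pp (p i) (p' j) \<longleftrightarrow> i \<noteq> j)"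

lemma frame_exists:
  assumes rank: "polar_rank P L n" and M1: "max_singular P L M1" and M2: "max_singular P L M2"
    and disj: "M1 \<inter> M2 = {}"
  shows "\<exists>p p'. inj_on p {..<n} \<and> inj_on p' {..<n} \<and> is_basis P L M1 (p ` {..<n}) \<and>
     is_basis P L M2 (p' ` {..<n}) \<and> (\<forall>i<n. \<forall>j<n. pp (p i) (p' j) \<longleftrightarrow> i \<noteq> j)"
proof -
  have M1s: "subspace P L M1" "clique M1" using M1 singular_iff max_singular_def by blast+
  have M2s: "subspace P L M2" "clique M2" using M2 singular_iff max_singular_def by blast+
  have M1P: "M1 \<subseteq> P" using sub_P[OF M1s(1)] .
  have M2P: "M2 \<subseteq> P" using sub_P[OF M2s(1)] .
  have sM1: "singular_subspace P L M1" using M1 max_singular_def by blast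
  obtain T0 where T0: "finite T0" "T0 \<subseteq> M1" "card T0 \<le> n" "span P L T0 = M1" using fg[OF rank sM1] by blast
  have bound: "k \<le> n" if h: "pf M1 M2 k p p'" for k p p'
  proof -
    have a1: "\<forall>i<k. p i \<in> span P L T0" using h T0(4) unfolding pf_def by blast
    have a2: "\<forall>j<k. p' j \<in> P" using h M2P unfolding pf_def by blast
    have a3: "\<forall>i<k. \<forall>j<k. pp (p i) (p' j) \<longleftrightarrow> i \<noteq> j" using h unfolding pf_def by blast
    have "T0 \<subseteq> P" using T0(2) M1P by blast
    moreover have "clique (span P L T0)" using T0(4) M1s(2) by simp
    ultimately have "k \<le> card T0" by (rule Dlem[OF T0(1) _ _ a1 a2 a3])
    thus ?thesis using T0(3) by simp
  qed
  define K where "K = {k. \<exists>p p'. pf M1 M2 k p p'}"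
  have "K \<subseteq> {..n}" using bound unfolding K_def by auto
  hence finK: "finite K" using finite_subset by blast
  have "pf M1 M2 0 p p" for p unfolding pf_def by simp
  hence K0: "0 \<in> K" unfolding K_def by blast
  define m where "m = Max K"
  have "m \<in> K" unfolding m_def using Max_in[OF finK] K0 by blast
  then obtain p p' where pfm: "pf M1 M2 m p p'" unfolding K_def by blast
  have mmax: "k \<le> m" if "pf M1 M2 k q q'" for k q q'
  proof -
    have "k \<in> K" using that K_def by blast
    thus "k \<le> m" unfolding m_def by (rule Max_ge[OF finK])
  qed
  have pts: "\<forall>i<m. p i \<in> M1 \<and> p' i \<in> M2" using pfm pf_def by blast
  have pat: "\<forall>i<m. \<forall>j<m. pp (p i) (p' j) \<longleftrightarrow> i \<noteq> j" using pfm pf_def by blast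
  have pat': "\<forall>i<m. \<forall>j<m. pp (p' i) (p j) \<longleftrightarrow> i \<noteq> j"
  proof (intro allI impI)
    fix i j assume i: "i < m" and j: "j < m"
    have "pp (p' i) (p j) \<longleftrightarrow> pp (p j) (p' i)" using perp_sym by blast
    also have "\<dots> \<longleftrightarrow> j \<noteq> i" using pat i j by blast
    finally show "pp (p' i) (p j) \<longleftrightarrow> i \<noteq> j" by blast
  qed
  have pts1: "\<forall>i<m. p i \<in> M1" using pts by blast
  have pts2: "\<forall>i<m. p' i \<in> M2" using pts by blast
  have pP1: "\<forall>j<m. p j \<in> P" using pts1 M1P by blast
  have pP2: "\<forall>j<m. p' j \<in> P" using pts2 M2P by blast
  define Hs where "Hs = {x\<in>M1. \<forall>i<m. pp (p' i) x}"
  define Hs' where "Hs' = {y\<in>M2. \<forall>i<m. pp (p i) y}"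
  have c1: "M1 \<subseteq> span P L (Hs \<union> p ` {..<m})" unfolding Hs_def using cover[OF M1s pts1 pP2 pat] .
  have c2: "M2 \<subseteq> span P L (Hs' \<union> p' ` {..<m})" unfolding Hs'_def using cover[OF M2s pts2 pP1 pat'] .
  have Hs0: "Hs = {}"
  proof (rule ccontr)
    assume "Hs \<noteq> {}"
    then obtain x where x: "x \<in> Hs" by blast
    have xM1: "x \<in> M1" and xp': "\<forall>i<m. pp (p' i) x" using x Hs_def by auto
    have xP: "x \<in> P" using xM1 M1P by blast
    show False
    proof (cases "\<forall>y\<in>Hs'. pp x y")
      case True
      have "Hs' \<union> p' ` {..<m} \<subseteq> perpset {x}"
      proof
        fix y assume y: "y \<in> Hs' \<union> p' ` {..<m}"
        show "y \<in> perpset {x}"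
        proof (cases "y \<in> Hs'")
          case True thus ?thesis using \<open>\<forall>y\<in>Hs'. pp x y\<close> perp_P unfolding perpset_def by blast
        next
          case False
          then obtain i where i: "i < m" "y = p' i" using y by auto
          thus ?thesis using xp' perp_sym perp_P unfolding perpset_def by blast
        qed
      qed
      hence "span P L (Hs' \<union> p' ` {..<m}) \<subseteq> perpset {x}" by (rule span_least[OF subspace_perpset])
      hence "\<forall>y\<in>M2. pp y x" using c2 perp_sym unfolding perpset_def by blast
      hence "x \<in> M2" using max_absorb[OF M2 xP] by blast
      thus False using xM1 disj by blast
    next
      case False
      then obtain y where y: "y \<in> Hs'" "\<not> pp x y" by blast
      have yM2: "y \<in> M2" and yp: "\<forall>i<m. pp (p i) y" using y Hs'_def by auto
      have g1: "\<forall>i<Suc m. (p(m := x)) i \<in> M1 \<and> (p'(m := y)) i \<in> M2"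
      proof (intro allI impI)
        fix i assume "i < Suc m"
        thus "(p(m := x)) i \<in> M1 \<and> (p'(m := y)) i \<in> M2" using pts xM1 yM2 less_Suc_eq by auto
      qed
      have g2: "\<forall>i<Suc m. \<forall>j<Suc m. pp ((p(m := x)) i) ((p'(m := y)) j) \<longleftrightarrow> i \<noteq> j"
      proof (intro allI impI)
        fix i j assume i: "i < Suc m" and j: "j < Suc m"
        show "pp ((p(m := x)) i) ((p'(m := y)) j) \<longleftrightarrow> i \<noteq> j"
        proof (cases "i = m")
          case True
          show ?thesis
          proof (cases "j = m")
            case True thus ?thesis using \<open>i = m\<close> y(2) by simp
          next
            case False
            hence "j < m" using j by simp
            thus ?thesis using \<open>i = m\<close> False xp' perp_sym by auto
          qed
        next
          case False
          hence im: "i < m" using i by simp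
          show ?thesis
          proof (cases "j = m")
            case True thus ?thesis using False im yp by auto
          next
            case False
            hence "j < m" using j by simp
            thus ?thesis using im \<open>i \<noteq> m\<close> False pat by auto
          qed
        qed
      qed
      have "pf M1 M2 (Suc m) (p(m := x)) (p'(m := y))" unfolding pf_def using g1 g2 by blast
      hence "Suc m \<le> m" by (rule mmax)
      thus False by simp
    qed
  qed
  have Hs'0: "Hs' = {}"
  proof (rule ccontr)
    assume "Hs' \<noteq> {}"
    then obtain y where y: "y \<in> Hs'" by blast
    have yM2: "y \<in> M2" and yp: "\<forall>i<m. pp (p i) y" using y Hs'_def by auto
    have yP: "y \<in> P" using yM2 M2P by blast
    have "p ` {..<m} \<subseteq> perpset {y}" using yp perp_sym yP pP1 unfolding perpset_def by auto
    hence "span P L (p ` {..<m}) \<subseteq> perpset {y}" by (rule span_least[OF subspace_perpset])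
    hence "\<forall>z\<in>M1. pp z y" using c1 Hs0 perp_sym unfolding perpset_def by auto
    hence "y \<in> M1" using max_absorb[OF M1 yP] by blast
    thus False using yM2 disj by blast
  qed
  have sp1: "span P L (p ` {..<m}) = M1"
  proof
    show "span P L (p ` {..<m}) \<subseteq> M1" using pts1 by (intro span_least[OF M1s(1)]) auto
    show "M1 \<subseteq> span P L (p ` {..<m})" using c1 Hs0 by simp
  qed
  have sp2: "span P L (p' ` {..<m}) = M2"
  proof
    show "span P L (p' ` {..<m}) \<subseteq> M2" using pts2 by (intro span_least[OF M2s(1)]) auto
    show "M2 \<subseteq> span P L (p' ` {..<m})" using c2 Hs'0 by simp
  qed
  have mn: "m \<le> n" using bound[OF pfm] .
  obtain S0 where S0: "singular_subspace P L S0" "proj_rank P L S0 n" using rank unfolding polar_rank_def by blast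
  obtain T where T: "finite T" "T \<subseteq> P" "card T \<le> m" "span P L T = S0"
    using Glem[OF rank M1 M2 disj pts pat sp1 sp2 S0(1)] by blast
  have "T \<subseteq> S0" using T(4) span_inc[of T] by blast
  hence "n \<le> card T" using S0(2) T unfolding proj_rank_def by blast
  hence "m = n" using mn T(3) by simp
  moreover have "inj_on p {..<m} \<and> is_basis P L M1 (p ` {..<m})" using basis_pattern[OF M1s(1) sp1 pts1 pP2 pat] .
  moreover have "inj_on p' {..<m} \<and> is_basis P L M2 (p' ` {..<m})" using basis_pattern[OF M2s(1) sp2 pts2 pP1 pat'] .
  ultimately show ?thesis using pat by blast
qed

end



lemma AB:
  assumes wo: "wo_nice_chain P L C"
  shows "(\<forall>C'. wo_nice_chain P L C' \<and> C \<subseteq> C' \<longrightarrow> C' = C)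
           \<longleftrightarrow> (\<forall>C'. nice_chain P L C' \<and> C \<subseteq> C' \<longrightarrow> C' = C)"
proof
  assume a: "\<forall>C'. wo_nice_chain P L C' \<and> C \<subseteq> C' \<longrightarrow> C' = C"
  show "\<forall>C'. nice_chain P L C' \<and> C \<subseteq> C' \<longrightarrow> C' = C"
  proof (intro allI impI)
    fix C' assume c: "nice_chain P L C' \<and> C \<subseteq> C'"
    have "C' \<subseteq> C"
    proof
      fix Z assume Z: "Z \<in> C'"
      have woC: "\<forall>D. D \<subseteq> C \<and> D \<noteq> {} \<longrightarrow> (\<exists>X\<in>D. \<forall>Y\<in>D. X \<subseteq> Y)"
        using wo unfolding wo_nice_chain_def by blast
      have ch: "\<forall>X\<in>C'. \<forall>Y\<in>C'. X \<subseteq> Y \<or> Y \<subseteq> X" using c unfolding nice_chain_def by blast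
      have "wo_nice_chain P L (insert Z C)"
        unfolding wo_nice_chain_def
      proof (intro conjI allI impI)
        show "nice_chain P L (insert Z C)" using c Z unfolding nice_chain_def by blast
        fix D assume D: "D \<subseteq> insert Z C \<and> D \<noteq> {}"
        show "\<exists>X\<in>D. \<forall>Y\<in>D. X \<subseteq> Y"
        proof (cases "Z \<in> D")
          case False
          hence "D \<subseteq> C" using D by blast
          thus ?thesis using woC D by blast
        next
          case True
          show ?thesis
          proof (cases "D - {Z} = {}")
            case True
            hence "D = {Z}" using \<open>Z \<in> D\<close> by blast
            thus ?thesis by blast
          next
            case False
            have "D - {Z} \<subseteq> C" using D by blast
            then obtain m where m: "m \<in> D - {Z}" "\<forall>Y\<in>D - {Z}. m \<subseteq> Y" using woC False by meson
            have mC': "m \<in> C'" using m D c by blast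
            show ?thesis
            proof (cases "Z \<subseteq> m")
              case True
              hence "\<forall>Y\<in>D. Z \<subseteq> Y" using m by blast
              thus ?thesis using \<open>Z \<in> D\<close> by blast
            next
              case False
              hence "m \<subseteq> Z" using ch Z mC' by blast
              hence "\<forall>Y\<in>D. m \<subseteq> Y" using m by blast
              thus ?thesis using m by blast
            qed
          qed
        qed
      qed
      hence "insert Z C = C" using a by blast
      thus "Z \<in> C" by blast
    qed
    thus "C' = C" using c by blast
  qed
next
  assume b: "\<forall>C'. nice_chain P L C' \<and> C \<subseteq> C' \<longrightarrow> C' = C"
  show "\<forall>C'. wo_nice_chain P L C' \<and> C \<subseteq> C' \<longrightarrow> C' = C"
    using b unfolding wo_nice_chain_def by blast
qed

context ps
begin

lemma ins:
  assumes mx: "\<forall>C'. nice_chain P L C' \<and> C \<subseteq> C' \<longrightarrow> C' = C" and ch: "nice_chain P L C"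
    and Z: "nice_subspace P L Z" and comp: "\<forall>W\<in>C. Z \<subseteq> W \<or> W \<subseteq> Z"
  shows "Z \<in> C"
proof -
  have "nice_chain P L (insert Z C)" using ch Z comp unfolding nice_chain_def by blast
  hence "insert Z C = C" using mx by blast
  thus ?thesis by blast
qed

lemma BC:
  assumes wo: "wo_nice_chain P L C" and mx: "\<forall>C'. nice_chain P L C' \<and> C \<subseteq> C' \<longrightarrow> C' = C"
  shows "(\<forall>X0\<in>C. (\<forall>Y\<in>C. X0 \<subseteq> Y) \<longrightarrow>
                    (\<forall>p p'. is_frame P L n X0 p p' \<longrightarrow> span P L (p ` {..<n} \<union> p' ` {..<n}) = X0))
               \<and> (\<forall>X\<in>C. \<forall>Y\<in>C. X \<subset> Y \<and> (\<forall>Z\<in>C. X \<subset> Z \<longrightarrow> Y \<subseteq> Z) \<longrightarrow>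
                    (\<not> (\<exists>Z. subspace P L Z \<and> X \<subset> Z \<and> Z \<subset> Y)))
               \<and> (\<forall>Y\<in>C. (\<exists>X\<in>C. X \<subset> Y) \<and> \<not> (\<exists>X\<in>C. X \<subset> Y \<and> \<not> (\<exists>Z\<in>C. X \<subset> Z \<and> Z \<subset> Y)) \<longrightarrow>
                    Y = \<Union> {X\<in>C. X \<subset> Y})"
proof (intro conjI)
  have ch: "nice_chain P L C" using wo unfolding wo_nice_chain_def by blast
  have chc: "\<forall>X\<in>C. \<forall>Y\<in>C. X \<subseteq> Y \<or> Y \<subseteq> X" using ch unfolding nice_chain_def by blast
  have nC: "\<forall>X\<in>C. nice_subspace P L X" using ch unfolding nice_chain_def by blast
  show "\<forall>X0\<in>C. (\<forall>Y\<in>C. X0 \<subseteq> Y) \<longrightarrow>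
         (\<forall>p p'. is_frame P L n X0 p p' \<longrightarrow> span P L (p ` {..<n} \<union> p' ` {..<n}) = X0)"
  proof (intro ballI impI allI)
    fix X0 p p' assume X0: "X0 \<in> C" and mn: "\<forall>Y\<in>C. X0 \<subseteq> Y" and fr: "is_frame P L n X0 p p'"
    obtain M1 M2 where M: "max_singular P L M1" "max_singular P L M2" "M1 \<subseteq> X0" "M2 \<subseteq> X0" "M1 \<inter> M2 = {}"
      "is_basis P L M1 (p ` {..<n})" "is_basis P L M2 (p' ` {..<n})"
      using fr unfolding is_frame_def by blast
    define F where "F = p ` {..<n} \<union> p' ` {..<n}"
    have subX0: "subspace P L X0" using nC X0 unfolding nice_subspace_def by blast
    have F1: "p ` {..<n} \<subseteq> M1" "span P L (p ` {..<n}) = M1" using M(6) unfolding is_basis_def by blast+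
    have F2: "p' ` {..<n} \<subseteq> M2" "span P L (p' ` {..<n}) = M2" using M(7) unfolding is_basis_def by blast+
    have FX: "F \<subseteq> X0" using F1 F2 M F_def by blast
    have FP: "F \<subseteq> P" using FX sub_P[OF subX0] by blast
    have subS: "subspace P L (span P L F)" using span_sub[OF FP] .
    have "M1 \<subseteq> span P L F" using F1(2) span_mono[of "p ` {..<n}" F] F_def by blast
    moreover have "M2 \<subseteq> span P L F" using F2(2) span_mono[of "p' ` {..<n}" F] F_def by blast
    ultimately have niceS: "nice_subspace P L (span P L F)" unfolding nice_subspace_def using subS M by blast
    have SX: "span P L F \<subseteq> X0" using span_least[OF subX0 FX] .
    have "\<forall>W\<in>C. span P L F \<subseteq> W \<or> W \<subseteq> span P L F" using SX mn by blast
    hence "span P L F \<in> C" using ins[OF mx ch niceS] by blast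
    hence "X0 \<subseteq> span P L F" using mn by blast
    thus "span P L (p ` {..<n} \<union> p' ` {..<n}) = X0" using SX F_def by blast
  qed
  show "\<forall>X\<in>C. \<forall>Y\<in>C. X \<subset> Y \<and> (\<forall>Z\<in>C. X \<subset> Z \<longrightarrow> Y \<subseteq> Z) \<longrightarrow>
                    (\<not> (\<exists>Z. subspace P L Z \<and> X \<subset> Z \<and> Z \<subset> Y))"
  proof (intro ballI impI notI)
    fix X Y assume X: "X \<in> C" and Y: "Y \<in> C" and h: "X \<subset> Y \<and> (\<forall>Z\<in>C. X \<subset> Z \<longrightarrow> Y \<subseteq> Z)"
      and ex: "\<exists>Z. subspace P L Z \<and> X \<subset> Z \<and> Z \<subset> Y"
    then obtain Z where Z: "subspace P L Z" "X \<subset> Z" "Z \<subset> Y" by blast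
    have nX: "nice_subspace P L X" using nC X by blast
    then obtain M1 M2 where M: "max_singular P L M1" "max_singular P L M2" "M1 \<subseteq> X" "M2 \<subseteq> X" "M1 \<inter> M2 = {}"
      unfolding nice_subspace_def by blast
    have "M1 \<subseteq> Z" "M2 \<subseteq> Z" using M(3,4) Z(2) by blast+
    hence "nice_subspace P L Z" unfolding nice_subspace_def using Z(1) M(1,2,5) by blast
    moreover have "\<forall>W\<in>C. Z \<subseteq> W \<or> W \<subseteq> Z"
    proof
      fix W assume W: "W \<in> C"
      show "Z \<subseteq> W \<or> W \<subseteq> Z"
      proof (cases "W \<subseteq> X")
        case True thus ?thesis using Z by blast
      next
        case False
        hence "X \<subset> W" using chc X W by blast
        hence "Y \<subseteq> W" using h W by blast
        thus ?thesis using Z by blast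
      qed
    qed
    ultimately have "Z \<in> C" by (rule ins[OF mx ch])
    hence "Y \<subseteq> Z" using h Z by blast
    thus False using Z by blast
  qed
  show "\<forall>Y\<in>C. (\<exists>X\<in>C. X \<subset> Y) \<and> \<not> (\<exists>X\<in>C. X \<subset> Y \<and> \<not> (\<exists>Z\<in>C. X \<subset> Z \<and> Z \<subset> Y)) \<longrightarrow>
                    Y = \<Union> {X\<in>C. X \<subset> Y}"
  proof (intro ballI impI)
    fix Y assume Y: "Y \<in> C" and h: "(\<exists>X\<in>C. X \<subset> Y) \<and> \<not> (\<exists>X\<in>C. X \<subset> Y \<and> \<not> (\<exists>Z\<in>C. X \<subset> Z \<and> Z \<subset> Y))"
    define U where "U = \<Union> {X\<in>C. X \<subset> Y}"
    obtain X1 where X1: "X1 \<in> C" "X1 \<subset> Y" using h by blast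
    have UY: "U \<subseteq> Y" unfolding U_def by blast
    have subU: "subspace P L U" unfolding subspace_def
    proof (intro conjI ballI impI)
      show "U \<subseteq> P" unfolding U_def using nC unfolding nice_subspace_def subspace_def by blast
      fix l assume l: "l \<in> L" and "\<exists>a b. a \<noteq> b \<and> a \<in> l \<and> b \<in> l \<and> a \<in> U \<and> b \<in> U"
      then obtain a b where ab: "a \<noteq> b" "a \<in> l" "b \<in> l" "a \<in> U" "b \<in> U" by blast
      obtain Xa where Xa: "Xa \<in> C" "Xa \<subset> Y" "a \<in> Xa" using ab U_def by blast
      obtain Xb where Xb: "Xb \<in> C" "Xb \<subset> Y" "b \<in> Xb" using ab U_def by blast
      show "l \<subseteq> U"
      proof (cases "Xa \<subseteq> Xb")
        case True
        have "subspace P L Xb" using nC Xb unfolding nice_subspace_def by blast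
        hence "l \<subseteq> Xb" using sub_line[of Xb l a b] l ab True Xa Xb by blast
        thus ?thesis using Xb U_def by blast
      next
        case False
        hence "Xb \<subseteq> Xa" using chc Xa Xb by blast
        have "subspace P L Xa" using nC Xa unfolding nice_subspace_def by blast
        hence "l \<subseteq> Xa" using sub_line[of Xa l a b] l ab \<open>Xb \<subseteq> Xa\<close> Xa Xb by blast
        thus ?thesis using Xa U_def by blast
      qed
    qed
    have "X1 \<subseteq> U" using X1 U_def by blast
    have nX1: "nice_subspace P L X1" using nC X1 by blast
    then obtain M1 M2 where M: "max_singular P L M1" "max_singular P L M2" "M1 \<subseteq> X1" "M2 \<subseteq> X1" "M1 \<inter> M2 = {}"
      unfolding nice_subspace_def by blast
    have "M1 \<subseteq> U" "M2 \<subseteq> U" using M(3,4) \<open>X1 \<subseteq> U\<close> by blast+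
    hence niceU: "nice_subspace P L U" unfolding nice_subspace_def using subU M(1,2,5) by blast
    show "Y = \<Union> {X\<in>C. X \<subset> Y}"
    proof (rule ccontr)
      assume "Y \<noteq> \<Union> {X\<in>C. X \<subset> Y}"
      hence UY': "U \<subset> Y" using UY U_def by blast
      have "\<forall>W\<in>C. U \<subseteq> W \<or> W \<subseteq> U"
      proof
        fix W assume W: "W \<in> C"
        show "U \<subseteq> W \<or> W \<subseteq> U"
        proof (cases "W \<subset> Y")
          case True thus ?thesis using W U_def by blast
        next
          case False
          hence "Y \<subseteq> W" using chc W Y by blast
          thus ?thesis using UY by blast
        qed
      qed
      hence UC: "U \<in> C" using ins[OF mx ch niceU] by blast
      have "\<not> (\<exists>Z\<in>C. U \<subset> Z \<and> Z \<subset> Y)" using U_def by blast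
      thus False using h UC UY' by blast
    qed
  qed
qed

lemma CB:
  assumes rank: "polar_rank P L n" and wo: "wo_nice_chain P L C" and PC: "P \<in> C"
    and c1: "\<forall>X0\<in>C. (\<forall>Y\<in>C. X0 \<subseteq> Y) \<longrightarrow>
                    (\<forall>p p'. is_frame P L n X0 p p' \<longrightarrow> span P L (p ` {..<n} \<union> p' ` {..<n}) = X0)"
    and c2: "\<forall>X\<in>C. \<forall>Y\<in>C. X \<subset> Y \<and> (\<forall>Z\<in>C. X \<subset> Z \<longrightarrow> Y \<subseteq> Z) \<longrightarrow>
                    (\<not> (\<exists>Z. subspace P L Z \<and> X \<subset> Z \<and> Z \<subset> Y))"
    and c3: "\<forall>Y\<in>C. (\<exists>X\<in>C. X \<subset> Y) \<and> \<not> (\<exists>X\<in>C. X \<subset> Y \<and> \<not> (\<exists>Z\<in>C. X \<subset> Z \<and> Z \<subset> Y)) \<longrightarrow>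
                    Y = \<Union> {X\<in>C. X \<subset> Y}"
  shows "\<forall>C'. nice_chain P L C' \<and> C \<subseteq> C' \<longrightarrow> C' = C"
proof (intro allI impI)
  have ch: "nice_chain P L C" using wo unfolding wo_nice_chain_def by blast
  have chc: "\<forall>X\<in>C. \<forall>Y\<in>C. X \<subseteq> Y \<or> Y \<subseteq> X" using ch unfolding nice_chain_def by blast
  have woC: "\<forall>D. D \<subseteq> C \<and> D \<noteq> {} \<longrightarrow> (\<exists>X\<in>D. \<forall>Y\<in>D. X \<subseteq> Y)"
    using wo unfolding wo_nice_chain_def by blast
  fix C' assume c: "nice_chain P L C' \<and> C \<subseteq> C'"
  have "C' \<subseteq> C"
  proof
    fix Z assume ZC': "Z \<in> C'"
    show "Z \<in> C"
    proof (rule ccontr)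
      assume ZnC: "Z \<notin> C"
      have Zn: "nice_subspace P L Z" using c ZC' unfolding nice_chain_def by blast
      have subZ: "subspace P L Z" using Zn unfolding nice_subspace_def by blast
      have chC': "\<forall>X\<in>C'. \<forall>Y\<in>C'. X \<subseteq> Y \<or> Y \<subseteq> X" using c unfolding nice_chain_def by blast
      have comp: "\<forall>W\<in>C. Z \<subset> W \<or> W \<subset> Z"
      proof
        fix W assume W: "W \<in> C"
        hence "W \<in> C'" using c by blast
        hence "Z \<subseteq> W \<or> W \<subseteq> Z" using chC' ZC' by blast
        moreover have "Z \<noteq> W" using W ZnC by blast
        ultimately show "Z \<subset> W \<or> W \<subset> Z" by blast
      qed
      have ZP: "Z \<subset> P" using sub_P[OF subZ] PC ZnC by blast
      define A where "A = {W\<in>C. Z \<subset> W}"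
      have "P \<in> A" using PC ZP A_def by blast
      hence "A \<subseteq> C \<and> A \<noteq> {}" unfolding A_def by blast
      hence "\<exists>X\<in>A. \<forall>Y\<in>A. X \<subseteq> Y" by (rule mp[OF spec[OF woC]])
      then obtain Y where Y: "Y \<in> A" "\<forall>W\<in>A. Y \<subseteq> W" by blast
      have YC: "Y \<in> C" and ZY: "Z \<subset> Y" using Y A_def by auto
      show False
      proof (cases "\<exists>W\<in>C. W \<subset> Z")
        case True
        show False
        proof (cases "\<exists>X\<in>C. X \<subset> Y \<and> \<not> (\<exists>Z'\<in>C. X \<subset> Z' \<and> Z' \<subset> Y)")
          case True
          then obtain X where X: "X \<in> C" "X \<subset> Y" "\<not> (\<exists>Z'\<in>C. X \<subset> Z' \<and> Z' \<subset> Y)" by blast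
          have XZ: "X \<subset> Z"
          proof (rule ccontr)
            assume "\<not> X \<subset> Z"
            hence "Z \<subset> X" using comp X by blast
            hence "X \<in> A" using X A_def by blast
            hence "Y \<subseteq> X" using Y by blast
            thus False using X by blast
          qed
          have "\<forall>Z'\<in>C. X \<subset> Z' \<longrightarrow> Y \<subseteq> Z'"
          proof (intro ballI impI)
            fix Z' assume "Z' \<in> C" "X \<subset> Z'"
            hence "Y \<subseteq> Z' \<or> Z' \<subseteq> Y" using chc YC by blast
            thus "Y \<subseteq> Z'"
            proof
              assume "Y \<subseteq> Z'" thus ?thesis .
            next
              assume "Z' \<subseteq> Y"
              show "Y \<subseteq> Z'"
              proof (cases "Z' = Y")
                case True thus ?thesis by simp
              next
                case False
                hence "Z' \<subset> Y" using \<open>Z' \<subseteq> Y\<close> by blast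
                thus ?thesis using X(3) \<open>Z' \<in> C\<close> \<open>X \<subset> Z'\<close> by blast
              qed
            qed
          qed
          hence "X \<subset> Y \<and> (\<forall>Z'\<in>C. X \<subset> Z' \<longrightarrow> Y \<subseteq> Z')" using X(2) by blast
          hence "\<not> (\<exists>Z. subspace P L Z \<and> X \<subset> Z \<and> Z \<subset> Y)" using bspec[OF bspec[OF c2 X(1)] YC] by (rule rev_mp)
          thus False using subZ XZ ZY by blast
        next
          case False
          obtain W where W: "W \<in> C" "W \<subset> Z" using True by blast
          have "W \<subset> Y" using W(2) ZY by (rule psubset_trans)
          hence "\<exists>X\<in>C. X \<subset> Y" using W(1) by blast
          hence "(\<exists>X\<in>C. X \<subset> Y) \<and> \<not> (\<exists>X\<in>C. X \<subset> Y \<and> \<not> (\<exists>Z\<in>C. X \<subset> Z \<and> Z \<subset> Y))" using False by blast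
          hence Yeq: "Y = \<Union> {X\<in>C. X \<subset> Y}" using bspec[OF c3 YC] by (rule rev_mp)
          have sub: "\<Union> {X\<in>C. X \<subset> Y} \<subseteq> Z"
          proof
            fix x assume "x \<in> \<Union> {X\<in>C. X \<subset> Y}"
            then obtain X where X: "X \<in> C" "X \<subset> Y" "x \<in> X" by blast
            have "X \<subset> Z"
            proof (rule ccontr)
              assume "\<not> X \<subset> Z"
              hence "Z \<subset> X" using comp X by blast
              hence "X \<in> A" using X A_def by blast
              hence "Y \<subseteq> X" using Y by blast
              thus False using X by blast
            qed
            thus "x \<in> Z" using X by blast
          qed
          have "Y \<subseteq> Z" using sub unfolding Yeq[symmetric] .
          thus False using ZY by blast
        qed
      next
        case False
        hence below: "\<forall>W\<in>C. Z \<subset> W" using comp by blast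
        have "C \<subseteq> C \<and> C \<noteq> {}" using PC by blast
        hence "\<exists>X\<in>C. \<forall>Y\<in>C. X \<subseteq> Y" by (rule mp[OF spec[OF woC]])
        then obtain X0 where X0: "X0 \<in> C" "\<forall>W\<in>C. X0 \<subseteq> W" by blast
        obtain M1 M2 where M: "max_singular P L M1" "max_singular P L M2" "M1 \<subseteq> Z" "M2 \<subseteq> Z" "M1 \<inter> M2 = {}"
          using Zn unfolding nice_subspace_def by blast
        obtain p p' where ppc: "inj_on p {..<n} \<and> inj_on p' {..<n} \<and> is_basis P L M1 (p ` {..<n}) \<and>
     is_basis P L M2 (p' ` {..<n}) \<and> (\<forall>i<n. \<forall>j<n. pp (p i) (p' j) \<longleftrightarrow> i \<noteq> j)"
          using frame_exists[OF rank M(1) M(2) M(5)] by (elim exE) (erule that)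
        note pp' = conjunct1[OF ppc] conjunct1[OF conjunct2[OF ppc]] conjunct1[OF conjunct2[OF conjunct2[OF ppc]]]
          conjunct1[OF conjunct2[OF conjunct2[OF conjunct2[OF ppc]]]] conjunct2[OF conjunct2[OF conjunct2[OF conjunct2[OF ppc]]]]
        have ZX0: "Z \<subset> X0" using below X0 by blast
        have MX: "M1 \<subseteq> X0" "M2 \<subseteq> X0" using M(3,4) ZX0 by blast+
        have fr: "is_frame P L n X0 p p'" unfolding is_frame_def
          apply (rule exI[of _ M1])
          apply (rule exI[of _ M2])
          by (intro conjI M(1) M(2) MX(1) MX(2) M(5) pp'(1) pp'(2) pp'(3) pp'(4) pp'(5))
        have fa: "\<forall>p p'. is_frame P L n X0 p p' \<longrightarrow> span P L (p ` {..<n} \<union> p' ` {..<n}) = X0"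
          using mp[OF bspec[OF c1 X0(1)] X0(2)] .
        have eq: "span P L (p ` {..<n} \<union> p' ` {..<n}) = X0" using fa[rule_format, OF fr] .
        have "p ` {..<n} \<subseteq> M1" "p' ` {..<n} \<subseteq> M2" using pp'(3,4) unfolding is_basis_def by blast+
        hence "p ` {..<n} \<union> p' ` {..<n} \<subseteq> Z" using M by blast
        hence "span P L (p ` {..<n} \<union> p' ` {..<n}) \<subseteq> Z" by (rule span_least[OF subZ])
        hence "X0 \<subseteq> Z" unfolding eq .
        thus False using ZX0 by blast
      qed
    qed
  qed
  thus "C' = C" using c by blast
qed

end

theorem lemma3:
  fixes P :: "'p set" and L :: "'p set set" and n :: nat and C :: "'p set set"
  assumes "polar_space P L" and "non_degenerate P L" and "polar_rank P L n" and "2 \<le> n"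
    and "\<forall>l\<in>L. \<not> thin_line l"
    and "wo_nice_chain P L C" and "P \<in> C"
  shows "((\<forall>C'. wo_nice_chain P L C' \<and> C \<subseteq> C' \<longrightarrow> C' = C)
           \<longleftrightarrow> (\<forall>C'. nice_chain P L C' \<and> C \<subseteq> C' \<longrightarrow> C' = C))
       \<and> ((\<forall>C'. nice_chain P L C' \<and> C \<subseteq> C' \<longrightarrow> C' = C)
           \<longleftrightarrow> ((\<forall>X0\<in>C. (\<forall>Y\<in>C. X0 \<subseteq> Y) \<longrightarrow>
                    (\<forall>p p'. is_frame P L n X0 p p' \<longrightarrow> span P L (p ` {..<n} \<union> p' ` {..<n}) = X0))
               \<and> (\<forall>X\<in>C. \<forall>Y\<in>C. X \<subset> Y \<and> (\<forall>Z\<in>C. X \<subset> Z \<longrightarrow> Y \<subseteq> Z) \<longrightarrow>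
                    (\<not> (\<exists>Z. subspace P L Z \<and> X \<subset> Z \<and> Z \<subset> Y)))
               \<and> (\<forall>Y\<in>C. (\<exists>X\<in>C. X \<subset> Y) \<and> \<not> (\<exists>X\<in>C. X \<subset> Y \<and> \<not> (\<exists>Z\<in>C. X \<subset> Z \<and> Z \<subset> Y)) \<longrightarrow>
                    Y = \<Union> {X\<in>C. X \<subset> Y})))"
proof -
  interpret ps P L using assms(1,2) by unfold_locales
  have ab: "(\<forall>C'. wo_nice_chain P L C' \<and> C \<subseteq> C' \<longrightarrow> C' = C)
           \<longleftrightarrow> (\<forall>C'. nice_chain P L C' \<and> C \<subseteq> C' \<longrightarrow> C' = C)" using AB[OF assms(6)] .
  show ?thesis
  proof (rule conjI[OF ab], rule iffI)
    assume mx: "\<forall>C'. nice_chain P L C' \<and> C \<subseteq> C' \<longrightarrow> C' = C"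
    show "(\<forall>X0\<in>C. (\<forall>Y\<in>C. X0 \<subseteq> Y) \<longrightarrow>
                    (\<forall>p p'. is_frame P L n X0 p p' \<longrightarrow> span P L (p ` {..<n} \<union> p' ` {..<n}) = X0))
               \<and> (\<forall>X\<in>C. \<forall>Y\<in>C. X \<subset> Y \<and> (\<forall>Z\<in>C. X \<subset> Z \<longrightarrow> Y \<subseteq> Z) \<longrightarrow>
                    (\<not> (\<exists>Z. subspace P L Z \<and> X \<subset> Z \<and> Z \<subset> Y)))
               \<and> (\<forall>Y\<in>C. (\<exists>X\<in>C. X \<subset> Y) \<and> \<not> (\<exists>X\<in>C. X \<subset> Y \<and> \<not> (\<exists>Z\<in>C. X \<subset> Z \<and> Z \<subset> Y)) \<longrightarrow>
                    Y = \<Union> {X\<in>C. X \<subset> Y})"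
      using BC[OF assms(6) mx] .
  next
    assume cc: "(\<forall>X0\<in>C. (\<forall>Y\<in>C. X0 \<subseteq> Y) \<longrightarrow>
                    (\<forall>p p'. is_frame P L n X0 p p' \<longrightarrow> span P L (p ` {..<n} \<union> p' ` {..<n}) = X0))
               \<and> (\<forall>X\<in>C. \<forall>Y\<in>C. X \<subset> Y \<and> (\<forall>Z\<in>C. X \<subset> Z \<longrightarrow> Y \<subseteq> Z) \<longrightarrow>
                    (\<not> (\<exists>Z. subspace P L Z \<and> X \<subset> Z \<and> Z \<subset> Y)))
               \<and> (\<forall>Y\<in>C. (\<exists>X\<in>C. X \<subset> Y) \<and> \<not> (\<exists>X\<in>C. X \<subset> Y \<and> \<not> (\<exists>Z\<in>C. X \<subset> Z \<and> Z \<subset> Y)) \<longrightarrow>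
                    Y = \<Union> {X\<in>C. X \<subset> Y})"
    show "\<forall>C'. nice_chain P L C' \<and> C \<subseteq> C' \<longrightarrow> C' = C"
      by (rule CB[OF assms(3) assms(6) assms(7) conjunct1[OF cc] conjunct1[OF conjunct2[OF cc]] conjunct2[OF conjunct2[OF cc]]])
  qed
qed


end
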